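(* Let $G$ be a connected graph, let $uv\in E(G)$, and let $G'$ be the graph obtained from $G$ by subdividing the edge $uv$ three times (i.e., replacing the edge $uv$ by a path $u x_1 x_2 x_3 v$ with three new vertices $x_1,x_2,x_3$). If $\gamma^{d}_2(G)\leq \frac{|V(G)|}{3}$, then $\gamma^{d}_2(G')\leq \frac{|V(G')|}{3}$.
   Context: All graphs are finite and simple. A set $S$ of vertices of a graph $G$ is a disjunctive dominating set of $G$ if every vertex not in $S$ is adjacent to a vertex of $S$ or has at least two vertices of $S$ at distance exactly $2$ from it in $G$. The disjunctive domination number $\gamma^{d}_2(G)$ is the minimum cardinality of a disjunctive dominating set of $G$. *)

theory Defs
  imports Complex_Main
begin

definition simple_graph :: "'a set \<Rightarrow> ('a \<Rightarrow> 'a \<Rightarrow> bool) \<Rightarrow> bool" where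
  "simple_graph V E \<longleftrightarrow> finite V \<and> (\<forall>x y. E x y \<longrightarrow> x \<in> V \<and> y \<in> V)
     \<and> (\<forall>x y. E x y \<longrightarrow> E y x) \<and> (\<forall>x. \<not> E x x)"

fun walk :: "('a \<Rightarrow> 'a \<Rightarrow> bool) \<Rightarrow> nat \<Rightarrow> 'a \<Rightarrow> 'a \<Rightarrow> bool" where
  "walk E 0 x y \<longleftrightarrow> x = y"
| "walk E (Suc n) x y \<longleftrightarrow> (\<exists>z. E x z \<and> walk E n z y)"

definition connected_graph :: "'a set \<Rightarrow> ('a \<Rightarrow> 'a \<Rightarrow> bool) \<Rightarrow> bool" where
  "connected_graph V E \<longleftrightarrow> V \<noteq> {} \<and> (\<forall>x\<in>V. \<forall>y\<in>V. \<exists>n. walk E n x y)"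

text \<open>Graph distance (length of a shortest walk); only used for connected pairs.\<close>
definition gdist :: "('a \<Rightarrow> 'a \<Rightarrow> bool) \<Rightarrow> 'a \<Rightarrow> 'a \<Rightarrow> nat" where
  "gdist E x y = (LEAST n. walk E n x y)"

definition disj_dom_set :: "'a set \<Rightarrow> ('a \<Rightarrow> 'a \<Rightarrow> bool) \<Rightarrow> 'a set \<Rightarrow> bool" where
  "disj_dom_set V E S \<longleftrightarrow> S \<subseteq> V \<and>
     (\<forall>x\<in>V - S. (\<exists>s\<in>S. E x s) \<or>
        2 \<le> card {s\<in>S. (\<exists>n. walk E n x s) \<and> gdist E x s = 2})"

definition disj_dom_num :: "'a set \<Rightarrow> ('a \<Rightarrow> 'a \<Rightarrow> bool) \<Rightarrow> nat" where
  "disj_dom_num V E = (LEAST k. \<exists>S. disj_dom_set V E S \<and> card S = k)"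

definition subdiv3_edges ::
  "('a \<Rightarrow> 'a \<Rightarrow> bool) \<Rightarrow> 'a \<Rightarrow> 'a \<Rightarrow> 'a \<Rightarrow> 'a \<Rightarrow> 'a \<Rightarrow> 'a \<Rightarrow> 'a \<Rightarrow> bool" where
  "subdiv3_edges E u v x1 x2 x3 = (\<lambda>a b.
     (E a b \<and> {a, b} \<noteq> {u, v}) \<or>
     {a, b} = {u, x1} \<or> {a, b} = {x1, x2} \<or> {a, b} = {x2, x3} \<or> {a, b} = {x3, v})"

end

theory Submission
  imports Defs
begin

definition dist2 :: "('a \<Rightarrow> 'a \<Rightarrow> bool) \<Rightarrow> 'a \<Rightarrow> 'a \<Rightarrow> bool" where
  "dist2 E x y \<longleftrightarrow> x \<noteq> y \<and> \<not> E x y \<and> (\<exists>m. E x m \<and> E m y)"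

lemma walk1: "walk E (Suc 0) x y \<longleftrightarrow> E x y" by auto
lemma walk2: "walk E 2 x y \<longleftrightarrow> (\<exists>m. E x m \<and> E m y)"
  by (simp add: numeral_2_eq_2)

lemma dist2_iff: "((\<exists>n. walk E n x y) \<and> gdist E x y = 2) \<longleftrightarrow> dist2 E x y"
proof
  assume h: "(\<exists>n. walk E n x y) \<and> gdist E x y = 2"
  then obtain n where n: "walk E n x y" by blast
  have w: "walk E (gdist E x y) x y" unfolding gdist_def using n by (rule LeastI)
  have l: "\<And>k. walk E k x y \<Longrightarrow> 2 \<le> k" using h unfolding gdist_def by (metis Least_le)
  have "\<not> walk E 0 x y" using l by fastforce
  moreover have "\<not> walk E (Suc 0) x y" using l by fastforce
  ultimately show "dist2 E x y" using w h unfolding dist2_def walk2[symmetric] by auto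
next
  assume d: "dist2 E x y"
  have w2: "walk E 2 x y" using d unfolding dist2_def walk2 by auto
  have "gdist E x y = 2" unfolding gdist_def
  proof (rule Least_equality)
    show "walk E 2 x y" by fact
    fix k assume "walk E k x y"
    then show "2 \<le> k" using d unfolding dist2_def
      by (cases k; cases "k - 1"; auto)
  qed
  then show "(\<exists>n. walk E n x y) \<and> gdist E x y = 2" using w2 by blast
qed

lemma dds_iff: "disj_dom_set V E S \<longleftrightarrow> S \<subseteq> V \<and>
     (\<forall>x\<in>V - S. (\<exists>s\<in>S. E x s) \<or> 2 \<le> card {s\<in>S. dist2 E x s})"
  unfolding disj_dom_set_def dist2_iff ..

lemma two_elems: "2 \<le> card A \<Longrightarrow> \<exists>a b. a \<in> A \<and> b \<in> A \<and> a \<noteq> b"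
  by (metis One_nat_def card.infinite card_le_Suc0_iff_eq not_less_eq_eq numeral_2_eq_2 zero_less_Suc leD)

lemma two_card: "finite A \<Longrightarrow> a \<in> A \<Longrightarrow> b \<in> A \<Longrightarrow> a \<noteq> b \<Longrightarrow> 2 \<le> card A"
  by (metis card_2_iff card_mono empty_subsetI insert_subset order_refl)


locale sub3 =
  fixes V :: "'a set" and E :: "'a \<Rightarrow> 'a \<Rightarrow> bool" and u v x1 x2 x3 :: 'a
  assumes sg: "simple_graph V E" and uv: "E u v"
    and n1: "x1 \<notin> V" and n2: "x2 \<notin> V" and n3: "x3 \<notin> V"
    and d12: "x1 \<noteq> x2" and d13: "x1 \<noteq> x3" and d23: "x2 \<noteq> x3"
begin

abbreviation "E' \<equiv> subdiv3_edges E u v x1 x2 x3"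

lemma inV: "E a b \<Longrightarrow> a \<in> V \<and> b \<in> V" using sg unfolding simple_graph_def by blast
lemma symE: "E a b \<Longrightarrow> E b a" using sg unfolding simple_graph_def by blast
lemma irr: "\<not> E a a" using sg unfolding simple_graph_def by blast
lemma uV: "u \<in> V" and vV: "v \<in> V" using inV[OF uv] by auto
lemma finV: "finite V" using sg unfolding simple_graph_def by blast

lemma E'_V: "a \<in> V \<Longrightarrow> b \<in> V \<Longrightarrow> E' a b \<longleftrightarrow> E a b \<and> \<not> (a = u \<and> b = v) \<and> \<not> (a = v \<and> b = u)"
  unfolding subdiv3_edges_def doubleton_eq_iff using n1 n2 n3 by blast
lemma notE: "x \<notin> V \<Longrightarrow> \<not> E a x" "x \<notin> V \<Longrightarrow> \<not> E x a" using inV by blast+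

lemma E'_x1: "E' a x1 \<longleftrightarrow> a = u \<or> a = x2" "E' x1 a \<longleftrightarrow> a = u \<or> a = x2"
  unfolding subdiv3_edges_def doubleton_eq_iff using n1 n2 n3 d12 d13 d23 uV vV notE[OF n1]
  by blast+
lemma E'_x2: "E' a x2 \<longleftrightarrow> a = x1 \<or> a = x3" "E' x2 a \<longleftrightarrow> a = x1 \<or> a = x3"
  unfolding subdiv3_edges_def doubleton_eq_iff using n1 n2 n3 d12 d13 d23 uV vV notE[OF n2]
  by blast+
lemma E'_x3: "E' a x3 \<longleftrightarrow> a = v \<or> a = x2" "E' x3 a \<longleftrightarrow> a = v \<or> a = x2"
proof -
  have h: "x3 \<noteq> u" "x3 \<noteq> v" using n3 uV vV by blast+
  have i: "\<not> E a x3" "\<not> E x3 a" using notE[OF n3] by blast+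
  show "E' a x3 \<longleftrightarrow> a = v \<or> a = x2" using h i d13 d23
    unfolding subdiv3_edges_def doubleton_eq_iff by auto
  show "E' x3 a \<longleftrightarrow> a = v \<or> a = x2" using h i d13 d23
    unfolding subdiv3_edges_def doubleton_eq_iff by auto
qed

lemma swap: "subdiv3_edges E u v x1 x2 x3 = subdiv3_edges E v u x3 x2 x1"
  unfolding subdiv3_edges_def by (intro ext) (simp add: doubleton_eq_iff, blast)

lemma sub3_swap: "sub3 V E v u x3 x2 x1"
  using sg symE[OF uv] n1 n2 n3 d12 d13 d23 by unfold_locales auto


lemma keep2:
  assumes "E x m" "E m c" "x \<noteq> c" "\<not> E x c" "\<not> (x = u \<and> m = v)" "\<not> (x = v \<and> m = u)"
    "\<not> (m = u \<and> c = v)" "\<not> (m = v \<and> c = u)"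
  shows "dist2 E' x c"
proof -
  have "x \<in> V" "m \<in> V" "c \<in> V" using inV assms(1,2) by blast+
  then show ?thesis unfolding dist2_def using assms E'_V by metis
qed

lemma other:
  assumes SV: "S \<subseteq> V" and "u \<notin> S" "v \<notin> S" and xV: "x \<in> V" and "x \<noteq> u" "x \<noteq> v"
    and dom: "(\<exists>s\<in>S. E x s) \<or> 2 \<le> card {s\<in>S. dist2 E x s}" and ST: "S \<subseteq> T" and fT: "finite T"
  shows "(\<exists>s\<in>T. E' x s) \<or> 2 \<le> card {s\<in>T. dist2 E' x s}"
proof (cases "\<exists>s\<in>S. E x s")
  case True
  then obtain s where s: "s \<in> S" "E x s" by blast
  then have "E' x s" using E'_V inV assms by metis
  then show ?thesis using s ST by blast
next
  case False
  have "{s\<in>S. dist2 E x s} \<subseteq> {s\<in>T. dist2 E' x s}"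
  proof
    fix c assume c: "c \<in> {s\<in>S. dist2 E x s}"
    then obtain m where m: "E x m" "E m c" "x \<noteq> c" "\<not> E x c" unfolding dist2_def by blast
    have "dist2 E' x c" using c assms m by (intro keep2[OF m]) auto
    then show "c \<in> {s\<in>T. dist2 E' x s}" using c ST by blast
  qed
  then have "card {s\<in>S. dist2 E x s} \<le> card {s\<in>T. dist2 E' x s}"
    by (intro card_mono) (use fT in auto)
  then show ?thesis using dom False by linarith
qed

lemma dds_A:
  assumes S: "disj_dom_set V E S" and uS: "u \<in> S"
  shows "disj_dom_set (V \<union> {x1,x2,x3}) E' (insert x3 S)"
proof -
  have SV: "S \<subseteq> V" and dom: "\<And>x. x\<in>V \<Longrightarrow> x\<notin>S \<Longrightarrow> (\<exists>s\<in>S. E x s) \<or> 2 \<le> card {s\<in>S. dist2 E x s}"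
    using S unfolding dds_iff by simp_all
  have finS': "finite (insert x3 S)" using SV finV finite_subset by blast
  have vx3: "E' v x3" by (simp add: E'_x3)
  have main: "(\<exists>s\<in>insert x3 S. E' x s) \<or> 2 \<le> card {s\<in>insert x3 S. dist2 E' x s}"
    if xV: "x \<in> V" and xS: "x \<notin> S" for x
  proof (cases "\<exists>s\<in>S. E x s")
    case True
    then obtain s where s: "s\<in>S" "E x s" by blast
    show ?thesis
    proof (cases "x = v")
      case True then show ?thesis using vx3 by blast
    next
      case False
      have "x \<noteq> u" using xS uS by blast
      moreover have "s \<in> V" using s SV by blast
      ultimately have "E' x s" using E'_V[OF xV \<open>s \<in> V\<close>] s(2) False by blast
      then show ?thesis using s by blast
    qed
  next
    case False
    have xu: "x \<noteq> u" using xS uS by blast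
    have xv: "x \<noteq> v" using False uS symE[OF uv] by blast
    have D2: "2 \<le> card {s\<in>S. dist2 E x s}" using dom xV xS False by blast
    have keep: "dist2 E' x c" if c: "c \<in> S" "dist2 E x c" "c \<noteq> u \<or> \<not> E x v" for c
    proof -
      obtain m where m: "E x m" "E m c" "x \<noteq> c" "\<not> E x c" using c unfolding dist2_def by blast
      have "m \<noteq> u" using m(1) False uS by blast
      then show ?thesis using c xu xv m(1) by (intro keep2[OF m]) auto
    qed
    show ?thesis
    proof (cases "E x v")
      case True
      from two_elems[OF D2] obtain a b where ab: "a \<in> S" "dist2 E x a" "b \<in> S" "dist2 E x b" "a \<noteq> b" by blast
      have "\<exists>c. c \<in> S \<and> dist2 E x c \<and> c \<noteq> u"
      proof (cases "a = u")
        case True then show ?thesis using ab by blast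
      next
        case False then show ?thesis using ab by blast
      qed
      then obtain c where c: "c \<in> S" "dist2 E x c" "c \<noteq> u" by blast
      have d1: "dist2 E' x c" using keep c by blast
      have "x \<noteq> x2" using xV n2 by blast
      then have "\<not> E' x x3" using xv E'_x3(1)[of x] by blast
      moreover have "E' x v" using True xu xv E'_V[OF xV vV] by blast
      ultimately have d2: "dist2 E' x x3" using vx3 xV n3 unfolding dist2_def by blast
      have "c \<noteq> x3" using c SV n3 by blast
      then show ?thesis
        by (intro disjI2 two_card[of _ c x3]) (use finS' d1 d2 c in auto)
    next
      case False
      have "{s\<in>S. dist2 E x s} \<subseteq> {s\<in>insert x3 S. dist2 E' x s}" using keep False by blast
      then have "card {s\<in>S. dist2 E x s} \<le> card {s\<in>insert x3 S. dist2 E' x s}"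
        by (intro card_mono) (use finS' in auto)
      then show ?thesis using D2 by linarith
    qed
  qed
  show ?thesis unfolding dds_iff
  proof (intro conjI ballI)
    show "insert x3 S \<subseteq> V \<union> {x1,x2,x3}" using SV by blast
    fix x assume "x \<in> V \<union> {x1,x2,x3} - insert x3 S"
    then consider "x = x1" | "x = x2" | "x \<in> V" "x \<notin> S" by blast
    then show "(\<exists>s\<in>insert x3 S. E' x s) \<or> 2 \<le> card {s\<in>insert x3 S. dist2 E' x s}"
    proof cases
      case 1 then show ?thesis using uS E'_x1 by blast
    next
      case 2 then show ?thesis using E'_x2 by blast
    next
      case 3 then show ?thesis using main by blast
    qed
  qed
qed

lemma dds_C:
  assumes S: "disj_dom_set V E S" and uS: "u \<notin> S" and vS: "v \<notin> S" and s0: "s0 \<in> S" "E v s0"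
  shows "disj_dom_set (V \<union> {x1,x2,x3}) E' (insert x1 S)"
proof -
  have SV: "S \<subseteq> V" and dom: "\<And>x. x\<in>V \<Longrightarrow> x\<notin>S \<Longrightarrow> (\<exists>s\<in>S. E x s) \<or> 2 \<le> card {s\<in>S. dist2 E x s}"
    using S unfolding dds_iff by simp_all
  have finS': "finite (insert x1 S)" using SV finV finite_subset by blast
  have s0V: "s0 \<in> V" using s0 SV by blast
  have s0u: "s0 \<noteq> u" using s0 uS by blast
  have vs0: "E' v s0" using E'_V[OF vV s0V] s0(2) s0u by blast
  have x3: "2 \<le> card {s\<in>insert x1 S. dist2 E' x3 s}"
  proof -
    have a1: "x1 \<noteq> v" using n1 vV by blast
    have a2: "\<not> E' x3 x1" using E'_x3(2)[of x1] d12 a1 by blast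
    have a3: "E' x3 x2" "E' x2 x1" using E'_x3(2)[of x2] E'_x2(2)[of x1] by blast+
    have b1: "dist2 E' x3 x1" unfolding dist2_def using d13 a2 a3 by blast
    have a4: "s0 \<noteq> v" using irr s0(2) by blast
    have a5: "\<not> E' x3 s0" using E'_x3(2)[of s0] n2 s0V a4 by blast
    have a6: "E' x3 v" using E'_x3(2)[of v] by blast
    have a7: "x3 \<noteq> s0" using n3 s0V by blast
    have b2: "dist2 E' x3 s0" unfolding dist2_def using vs0 a5 a6 a7 by blast
    have b3: "x1 \<noteq> s0" using n1 s0V by blast
    show ?thesis by (intro two_card[of _ x1 s0]) (use finS' b1 b2 b3 s0 in auto)
  qed
  show ?thesis unfolding dds_iff
  proof (intro conjI ballI)
    show "insert x1 S \<subseteq> V \<union> {x1,x2,x3}" using SV by blast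
    fix x assume "x \<in> V \<union> {x1,x2,x3} - insert x1 S"
    then consider "x = x2" | "x = x3" | "x = u" | "x = v" | "x \<in> V" "x \<notin> S" "x \<noteq> u" "x \<noteq> v" by blast
    then show "(\<exists>s\<in>insert x1 S. E' x s) \<or> 2 \<le> card {s\<in>insert x1 S. dist2 E' x s}"
    proof cases
      case 1 then show ?thesis using E'_x2 by blast
    next
      case 2 then show ?thesis using x3 by blast
    next
      case 3 then show ?thesis using E'_x1 by blast
    next
      case 4 then show ?thesis using vs0 s0 by blast
    next
      case 5 then show ?thesis using other[OF SV uS vS] dom finS' by blast
    qed
  qed
qed

lemma dds_E:
  assumes S: "disj_dom_set V E S" and uS: "u \<notin> S" and vS: "v \<notin> S"
    and nu: "\<not> (\<exists>s\<in>S. E u s)" and nv: "\<not> (\<exists>s\<in>S. E v s)"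
  shows "disj_dom_set (V \<union> {x1,x2,x3}) E' (insert x2 S)"
proof -
  have SV: "S \<subseteq> V" and dom: "\<And>x. x\<in>V \<Longrightarrow> x\<notin>S \<Longrightarrow> (\<exists>s\<in>S. E x s) \<or> 2 \<le> card {s\<in>S. dist2 E x s}"
    using S unfolding dds_iff by simp_all
  have finS': "finite (insert x2 S)" using SV finV finite_subset by blast
  have ends: "2 \<le> card {s\<in>insert x2 S. dist2 E' w s}" if w: "w = u \<or> w = v" and wn: "\<not> (\<exists>s\<in>S. E w s)" for w
  proof -
    have "{s\<in>S. dist2 E w s} \<subseteq> {s\<in>insert x2 S. dist2 E' w s}"
    proof
      fix c assume c: "c \<in> {s\<in>S. dist2 E w s}"
      then obtain m where m: "E w m" "E m c" "w \<noteq> c" "\<not> E w c" unfolding dist2_def by blast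
      have "m \<noteq> u" "m \<noteq> v" using m(2) c nu nv symE by blast+
      then have "dist2 E' w c" by (intro keep2[OF m]) auto
      then show "c \<in> {s\<in>insert x2 S. dist2 E' w s}" using c by blast
    qed
    then have "card {s\<in>S. dist2 E w s} \<le> card {s\<in>insert x2 S. dist2 E' w s}"
      by (intro card_mono) (use finS' in auto)
    moreover have "2 \<le> card {s\<in>S. dist2 E w s}" using dom[of w] w uV vV uS vS wn by blast
    ultimately show ?thesis by linarith
  qed
  show ?thesis unfolding dds_iff
  proof (intro conjI ballI)
    show "insert x2 S \<subseteq> V \<union> {x1,x2,x3}" using SV by blast
    fix x assume "x \<in> V \<union> {x1,x2,x3} - insert x2 S"
    then consider "x = x1" | "x = x3" | "x = u" | "x = v" | "x \<in> V" "x \<notin> S" "x \<noteq> u" "x \<noteq> v" by blast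
    then show "(\<exists>s\<in>insert x2 S. E' x s) \<or> 2 \<le> card {s\<in>insert x2 S. dist2 E' x s}"
    proof cases
      case 1 then show ?thesis using E'_x1 by blast
    next
      case 2 then show ?thesis using E'_x3 by blast
    next
      case 3 then show ?thesis using ends nu by blast
    next
      case 4 then show ?thesis using ends nv by blast
    next
      case 5 then show ?thesis using other[OF SV uS vS] dom finS' by blast
    qed
  qed
qed

end

theorem lemma2p3:
  fixes V :: "'a set" and E :: "'a \<Rightarrow> 'a \<Rightarrow> bool" and u v x1 x2 x3 :: 'a
  assumes "simple_graph V E" and "connected_graph V E"
    and "E u v"
    and "x1 \<notin> V" and "x2 \<notin> V" and "x3 \<notin> V"
    and "x1 \<noteq> x2" and "x1 \<noteq> x3" and "x2 \<noteq> x3"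
    and "real (disj_dom_num V E) \<le> real (card V) / 3"
  shows "real (disj_dom_num (V \<union> {x1, x2, x3}) (subdiv3_edges E u v x1 x2 x3))
           \<le> real (card (V \<union> {x1, x2, x3})) / 3"
proof -
  interpret s: sub3 V E u v x1 x2 x3 using assms by unfold_locales auto
  interpret t: sub3 V E v u x3 x2 x1 by (rule s.sub3_swap)
  let ?V' = "V \<union> {x1, x2, x3}"
  let ?E' = "subdiv3_edges E u v x1 x2 x3"
  have VV: "V \<union> {x3, x2, x1} = ?V'" by blast
  have EE: "subdiv3_edges E v u x3 x2 x1 = ?E'" using s.swap by (rule sym)
  have "disj_dom_set V E V" unfolding disj_dom_set_def by blast
  then have "\<exists>k S. disj_dom_set V E S \<and> card S = k" by blast
  then have "\<exists>S. disj_dom_set V E S \<and> card S = disj_dom_num V E"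
    unfolding disj_dom_num_def by (rule LeastI_ex)
  then obtain S where S: "disj_dom_set V E S" "card S = disj_dom_num V E" by blast
  have finS: "finite S" using S(1) s.finV unfolding disj_dom_set_def using finite_subset by blast
  have "\<exists>x. disj_dom_set ?V' ?E' (insert x S)"
  proof (cases "u \<in> S")
    case True then show ?thesis using s.dds_A[OF S(1)] by blast
  next
    case uS: False
    show ?thesis
    proof (cases "v \<in> S")
      case True
      have "disj_dom_set (V \<union> {x3, x2, x1}) (subdiv3_edges E v u x3 x2 x1) (insert x1 S)"
        using t.dds_A[OF S(1) True] .
      then show ?thesis unfolding VV EE by blast
    next
      case vS: False
      show ?thesis
      proof (cases "\<exists>s\<in>S. E v s")
        case True
        then obtain s0 where "s0 \<in> S" "E v s0" by blast
        then show ?thesis using s.dds_C[OF S(1) uS vS] by blast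
      next
        case nv: False
        show ?thesis
        proof (cases "\<exists>s\<in>S. E u s")
          case True
          then obtain s0 where "s0 \<in> S" "E u s0" by blast
          have "disj_dom_set (V \<union> {x3, x2, x1}) (subdiv3_edges E v u x3 x2 x1) (insert x3 S)"
            using t.dds_C[OF S(1) vS uS \<open>s0 \<in> S\<close> \<open>E u s0\<close>] .
          then show ?thesis unfolding VV EE by blast
        next
          case False then show ?thesis using s.dds_E[OF S(1) uS vS False nv] by blast
        qed
      qed
    qed
  qed
  then obtain x where x: "disj_dom_set ?V' ?E' (insert x S)" by blast
  have "disj_dom_num ?V' ?E' \<le> card (insert x S)"
    unfolding disj_dom_num_def using x by (intro Least_le) blast
  also have "\<dots> \<le> card S + 1" using finS by (simp add: card_insert_if)
  finally have le: "disj_dom_num ?V' ?E' \<le> disj_dom_num V E + 1" using S(2) by simp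
  have VI: "?V' = insert x1 (insert x2 (insert x3 V))" by blast
  have "card ?V' = card V + 3" unfolding VI using assms(4-9) s.finV by simp
  then have c: "real (card ?V') = real (card V) + 3" by simp
  have "real (disj_dom_num ?V' ?E') \<le> real (disj_dom_num V E) + 1" using le by linarith
  then show ?thesis using c assms(10) by linarith
qed

end
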